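(* Let $L\subseteq Q$ be an extension of Lie algebras, $I$ an ideal of $L$, and $q_1,\dots,q_n\in Q$ with $[q_i,I]\subseteq L$ for all $i=1,\dots,n$. Let $\mu=\mathrm{ad}_{q_1}\cdots\mathrm{ad}_{q_n}\in A(Q)$. Then $\mu\,(\widetilde I)^n\subseteq A_0$ and $(\widetilde I)^n\mu\subseteq A_0$, where $(\widetilde I)^n$ is the $n$-th power of $\widetilde I$ in the associative algebra $A_Q(L)$.
   Context: Lie algebras over a commutative unital ring $\Phi$. For a Lie algebra $Q$, $\mathrm{ad}_x(y)=[x,y]$, and $A(Q)$ is the associative subalgebra of $\mathrm{End}_\Phi(Q)$ generated by $\{\mathrm{ad}_x:x\in Q\}$. For a Lie subalgebra $L\subseteq Q$: $A_Q(L)$ is the subalgebra of $A(Q)$ generated by $\{\mathrm{ad}_x:x\in L\}$, $A_0=\{\mu\in A(Q):\mu(L)\subseteq L\}$, and for an ideal $I$ of $L$, $\widetilde I$ is the two-sided ideal of $A_Q(L)$ generated by $\{\mathrm{ad}_x:x\in I\}$. *)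

theory Defs
  imports Complex_Main
begin

locale lie_algebra = module sc
  for sc :: "'r::comm_ring_1 \<Rightarrow> 'q::ab_group_add \<Rightarrow> 'q" +
  fixes br :: "'q \<Rightarrow> 'q \<Rightarrow> 'q"
  assumes br_add_left: "br (x + y) z = br x z + br y z"
    and br_add_right: "br x (y + z) = br x y + br x z"
    and br_scale_left: "br (sc c x) y = sc c (br x y)"
    and br_scale_right: "br x (sc c y) = sc c (br x y)"
    and br_alt: "br x x = 0"
    and jacobi: "br x (br y z) + br y (br z x) + br z (br x y) = 0"

definition ad :: "('q \<Rightarrow> 'q \<Rightarrow> 'q) \<Rightarrow> 'q \<Rightarrow> 'q \<Rightarrow> 'q" where
  "ad br x = (\<lambda>y. br x y)"

definition lie_subalgebra ::
  "('r::comm_ring_1 \<Rightarrow> 'q::ab_group_add \<Rightarrow> 'q) \<Rightarrow> ('q \<Rightarrow> 'q \<Rightarrow> 'q) \<Rightarrow> 'q set \<Rightarrow> bool" where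
  "lie_subalgebra sc br L \<longleftrightarrow> 0 \<in> L \<and> (\<forall>x\<in>L. \<forall>y\<in>L. x + y \<in> L)
     \<and> (\<forall>c. \<forall>x\<in>L. sc c x \<in> L) \<and> (\<forall>x\<in>L. \<forall>y\<in>L. br x y \<in> L)"

definition lie_ideal ::
  "('r::comm_ring_1 \<Rightarrow> 'q::ab_group_add \<Rightarrow> 'q) \<Rightarrow> ('q \<Rightarrow> 'q \<Rightarrow> 'q) \<Rightarrow> 'q set \<Rightarrow> 'q set \<Rightarrow> bool" where
  "lie_ideal sc br L I \<longleftrightarrow> I \<subseteq> L \<and> 0 \<in> I \<and> (\<forall>x\<in>I. \<forall>y\<in>I. x + y \<in> I)
     \<and> (\<forall>c. \<forall>x\<in>I. sc c x \<in> I) \<and> (\<forall>x\<in>L. \<forall>y\<in>I. br x y \<in> I)"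

inductive_set alg_gen ::
  "('r::comm_ring_1 \<Rightarrow> 'q::ab_group_add \<Rightarrow> 'q) \<Rightarrow> ('q \<Rightarrow> 'q) set \<Rightarrow> ('q \<Rightarrow> 'q) set"
  for sc :: "'r::comm_ring_1 \<Rightarrow> 'q::ab_group_add \<Rightarrow> 'q" and S :: "('q \<Rightarrow> 'q) set" where
  gen: "f \<in> S \<Longrightarrow> f \<in> alg_gen sc S"
| zero: "(\<lambda>x. 0) \<in> alg_gen sc S"
| add: "f \<in> alg_gen sc S \<Longrightarrow> g \<in> alg_gen sc S \<Longrightarrow> (\<lambda>x. f x + g x) \<in> alg_gen sc S"
| smult: "f \<in> alg_gen sc S \<Longrightarrow> (\<lambda>x. sc c (f x)) \<in> alg_gen sc S"
| mult: "f \<in> alg_gen sc S \<Longrightarrow> g \<in> alg_gen sc S \<Longrightarrow> f \<circ> g \<in> alg_gen sc S"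

inductive_set ideal_gen ::
  "('r::comm_ring_1 \<Rightarrow> 'q::ab_group_add \<Rightarrow> 'q) \<Rightarrow> ('q \<Rightarrow> 'q) set \<Rightarrow> ('q \<Rightarrow> 'q) set \<Rightarrow> ('q \<Rightarrow> 'q) set"
  for sc :: "'r::comm_ring_1 \<Rightarrow> 'q::ab_group_add \<Rightarrow> 'q" and A :: "('q \<Rightarrow> 'q) set"
    and S :: "('q \<Rightarrow> 'q) set" where
  gen: "f \<in> S \<Longrightarrow> f \<in> ideal_gen sc A S"
| zero: "(\<lambda>x. 0) \<in> ideal_gen sc A S"
| add: "f \<in> ideal_gen sc A S \<Longrightarrow> g \<in> ideal_gen sc A S \<Longrightarrow> (\<lambda>x. f x + g x) \<in> ideal_gen sc A S"
| smult: "f \<in> ideal_gen sc A S \<Longrightarrow> (\<lambda>x. sc c (f x)) \<in> ideal_gen sc A S"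
| lmult: "a \<in> A \<Longrightarrow> f \<in> ideal_gen sc A S \<Longrightarrow> a \<circ> f \<in> ideal_gen sc A S"
| rmult: "a \<in> A \<Longrightarrow> f \<in> ideal_gen sc A S \<Longrightarrow> f \<circ> a \<in> ideal_gen sc A S"

inductive_set set_prod ::
  "('r::comm_ring_1 \<Rightarrow> 'q::ab_group_add \<Rightarrow> 'q) \<Rightarrow> ('q \<Rightarrow> 'q) set \<Rightarrow> ('q \<Rightarrow> 'q) set \<Rightarrow> ('q \<Rightarrow> 'q) set"
  for sc :: "'r::comm_ring_1 \<Rightarrow> 'q::ab_group_add \<Rightarrow> 'q" and S :: "('q \<Rightarrow> 'q) set"
    and T :: "('q \<Rightarrow> 'q) set" where
  prod: "f \<in> S \<Longrightarrow> g \<in> T \<Longrightarrow> f \<circ> g \<in> set_prod sc S T"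
| zero: "(\<lambda>x. 0) \<in> set_prod sc S T"
| add: "f \<in> set_prod sc S T \<Longrightarrow> g \<in> set_prod sc S T \<Longrightarrow> (\<lambda>x. f x + g x) \<in> set_prod sc S T"
| smult: "f \<in> set_prod sc S T \<Longrightarrow> (\<lambda>x. sc c (f x)) \<in> set_prod sc S T"

text \<open>n-th power of an ideal J (n \<ge> 1): J^1 = J, J^(n+1) = J J^n.
 (The value at n = 0 is not used.)\<close>
fun ideal_pow ::
  "('r::comm_ring_1 \<Rightarrow> 'q::ab_group_add \<Rightarrow> 'q) \<Rightarrow> ('q \<Rightarrow> 'q) set \<Rightarrow> nat \<Rightarrow> ('q \<Rightarrow> 'q) set" where
  "ideal_pow sc J 0 = {\<lambda>x. 0}"
| "ideal_pow sc J (Suc 0) = J"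
| "ideal_pow sc J (Suc (Suc n)) = set_prod sc J (ideal_pow sc J (Suc n))"

definition AQ :: "('r::comm_ring_1 \<Rightarrow> 'q::ab_group_add \<Rightarrow> 'q) \<Rightarrow> ('q \<Rightarrow> 'q \<Rightarrow> 'q) \<Rightarrow> ('q \<Rightarrow> 'q) set" where
  "AQ sc br = alg_gen sc (ad br ` UNIV)"

definition AQL :: "('r::comm_ring_1 \<Rightarrow> 'q::ab_group_add \<Rightarrow> 'q) \<Rightarrow> ('q \<Rightarrow> 'q \<Rightarrow> 'q) \<Rightarrow> 'q set \<Rightarrow> ('q \<Rightarrow> 'q) set" where
  "AQL sc br L = alg_gen sc (ad br ` L)"

definition A0 :: "('r::comm_ring_1 \<Rightarrow> 'q::ab_group_add \<Rightarrow> 'q) \<Rightarrow> ('q \<Rightarrow> 'q \<Rightarrow> 'q) \<Rightarrow> 'q set \<Rightarrow> ('q \<Rightarrow> 'q) set" where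
  "A0 sc br L = {m \<in> AQ sc br. m ` L \<subseteq> L}"

definition Itilde :: "('r::comm_ring_1 \<Rightarrow> 'q::ab_group_add \<Rightarrow> 'q) \<Rightarrow> ('q \<Rightarrow> 'q \<Rightarrow> 'q) \<Rightarrow> 'q set \<Rightarrow> 'q set \<Rightarrow> ('q \<Rightarrow> 'q) set" where
  "Itilde sc br L I = ideal_gen sc (AQL sc br L) (ad br ` I)"

definition ad_prod :: "('q \<Rightarrow> 'q \<Rightarrow> 'q) \<Rightarrow> 'q list \<Rightarrow> 'q \<Rightarrow> 'q" where
  "ad_prod br qs = foldr (\<lambda>q f. ad br q \<circ> f) qs id"

end

theory Submission
  imports Defs
begin

inductive Dn :: "('r::comm_ring_1 \<Rightarrow> 'q::ab_group_add \<Rightarrow> 'q) \<Rightarrow> ('q \<Rightarrow> 'q \<Rightarrow> 'q) \<Rightarrow> 'q set \<Rightarrow> 'q set \<Rightarrow> nat \<Rightarrow> 'q \<Rightarrow> bool"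
  for sc br L I where
  base: "v \<in> L \<Longrightarrow> Dn sc br L I 0 v"
| brk: "x \<in> I \<Longrightarrow> Dn sc br L I k v \<Longrightarrow> Dn sc br L I (Suc k) (br x v)"
| zer: "Dn sc br L I k 0"
| ad: "Dn sc br L I k v \<Longrightarrow> Dn sc br L I k w \<Longrightarrow> Dn sc br L I k (v + w)"
| sm: "Dn sc br L I k v \<Longrightarrow> Dn sc br L I k (sc c v)"

fun Up :: "('q \<Rightarrow> 'q \<Rightarrow> 'q) \<Rightarrow> 'q set \<Rightarrow> 'q set \<Rightarrow> nat \<Rightarrow> 'q set" where
  "Up br L I 0 = L"
| "Up br L I (Suc k) = {v. \<forall>x\<in>I. br x v \<in> Up br L I k}"

lemma grp3: "(A::'a::ab_group_add) + B + C = 0 \<Longrightarrow> B = - X \<Longrightarrow> C = - Y \<Longrightarrow> A = Y + X"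
  by (metis add.commute add_diff_cancel_left' add_diff_eq diff_0 diff_minus_eq_add minus_diff_eq)

context lie_algebra
begin

lemma br_zero_right[simp]: "br x 0 = 0"
  using br_add_right[of x 0 0] by simp

lemma br_zero_left[simp]: "br 0 x = 0"
  using br_add_left[of 0 0 x] by simp

lemma br_anti: "br y x = - br x y"
proof -
  have "br (x+y) (x+y) = 0" by (rule br_alt)
  moreover have "br (x+y) (x+y) = br x x + br x y + (br y x + br y y)"
    by (simp add: br_add_left br_add_right)
  ultimately have "br x y + br y x = 0" by (simp add: br_alt)
  thus ?thesis by (simp add: add_eq_0_iff)
qed

lemma J1: "br a (br b c) = br (br a b) c + br b (br a c)"
proof -
  have "br a (br b c) + br b (br c a) + br c (br a b) = 0" by (rule jacobi)
  moreover have "br b (br c a) = - br b (br a c)" using br_anti[of a c]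
    by (metis add.inverse_inverse add_eq_0_iff br_add_right br_zero_right)
  moreover have "br c (br a b) = - br (br a b) c" by (rule br_anti)
  ultimately show ?thesis by (rule grp3)
qed

lemma neg_mem:
  assumes "\<forall>c. \<forall>x\<in>S. sc c x \<in> S" "x \<in> S" shows "- x \<in> S"
  using assms by (metis scale_minus_left scale_one)

lemma Dn_mem:
  assumes "lie_ideal sc br L I" "Dn sc br L I k v" "lie_subalgebra sc br L"
  shows "(k = 0 \<longrightarrow> v \<in> L) \<and> (k > 0 \<longrightarrow> v \<in> I)"
  using assms(2)
proof induction
  case (base v) then show ?case by simp
next
  case (brk x k v)
  show ?case
  proof (cases k)
    case 0
    then have "v \<in> L" using brk by simp
    then have "br v x \<in> I" using assms(1) brk(1) unfolding lie_ideal_def by blast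
    then have "- br v x \<in> I" using assms(1) neg_mem unfolding lie_ideal_def by blast
    then show ?thesis using br_anti[of x v] by simp
  next
    case (Suc k')
    then have "v \<in> I" using brk by simp
    then have "v \<in> L" using assms(1) unfolding lie_ideal_def by blast
    then have "br v x \<in> I" using assms(1) brk(1) unfolding lie_ideal_def by blast
    then have "- br v x \<in> I" using assms(1) neg_mem unfolding lie_ideal_def by blast
    then show ?thesis using br_anti[of x v] by simp
  qed
next
  case (zer k)
  then show ?case using assms(1,3) unfolding lie_ideal_def lie_subalgebra_def by auto
next
  case (ad k v w)
  then show ?case using assms(1,3) unfolding lie_ideal_def lie_subalgebra_def by auto
next
  case (sm k v c)
  then show ?case using assms(1,3) unfolding lie_ideal_def lie_subalgebra_def by auto
qed

lemma Dn_L: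
  assumes "lie_subalgebra sc br L" "lie_ideal sc br L I" "Dn sc br L I k v" "y \<in> L"
  shows "Dn sc br L I k (br y v)"
  using assms(3)
proof induction
  case (base v)
  then show ?case using assms(1,4) unfolding lie_subalgebra_def by (blast intro: Dn.base)
next
  case (brk x k v)
  have "br y x \<in> I" using assms(2,4) brk(1) unfolding lie_ideal_def by blast
  then have "Dn sc br L I (Suc k) (br (br y x) v + br x (br y v))"
    using brk by (blast intro: Dn.intros)
  then show ?case unfolding J1[of y x v] .
next
  case (zer k) then show ?case by (simp add: Dn.zer)
next
  case (ad k v w) then show ?case by (simp add: br_add_right Dn.ad)
next
  case (sm k v c) then show ?case by (simp add: br_scale_right Dn.sm)
qed

lemma Dn_q:
  assumes "lie_subalgebra sc br L" "lie_ideal sc br L I" "\<forall>x\<in>I. br q x \<in> L"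
    "Dn sc br L I m v"
  shows "m = Suc k \<Longrightarrow> Dn sc br L I k (br q v)"
  using assms(4)
proof (induction arbitrary: k)
  case (base v) then show ?case by simp
next
  case (brk x k' v)
  then have k': "k' = k" by simp
  show ?case
  proof (cases k)
    case 0
    have "Dn sc br L I (Suc 0) (br x v)" using brk k' 0 by (blast intro: Dn.brk)
    then have "br x v \<in> I" using Dn_mem[OF assms(2) _ assms(1)] by fastforce
    then show ?thesis using assms(3) 0 by (blast intro: Dn.base)
  next
    case (Suc k'')
    have qx: "br q x \<in> L" using assms(3) brk(1) by blast
    have "Dn sc br L I k (br (br q x) v)" using Dn_L[OF assms(1,2) _ qx] brk k' by blast
    moreover have "Dn sc br L I k (br x (br q v))"
      using brk(3)[of k''] brk(1) Suc k' by (simp add: Dn.brk)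
    ultimately show ?thesis unfolding J1[of q x v] by (rule Dn.ad)
  qed
next
  case (zer k) then show ?case by (simp add: Dn.zer)
next
  case (ad k v w) then show ?case by (simp add: br_add_right Dn.ad)
next
  case (sm k v c) then show ?case by (simp add: br_scale_right Dn.sm)
qed

lemma Up_closed:
  assumes "lie_subalgebra sc br L"
  shows "0 \<in> Up br L I k \<and> (\<forall>v\<in>Up br L I k. \<forall>w\<in>Up br L I k. v + w \<in> Up br L I k)
     \<and> (\<forall>c. \<forall>v\<in>Up br L I k. sc c v \<in> Up br L I k)"
proof (induction k)
  case 0 then show ?case using assms unfolding lie_subalgebra_def by simp
next
  case (Suc k) then show ?case by (simp add: br_add_right br_scale_right)
qed

lemma Up_L:
  assumes "lie_subalgebra sc br L" "lie_ideal sc br L I"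
  shows "v \<in> Up br L I k \<Longrightarrow> y \<in> L \<Longrightarrow> br y v \<in> Up br L I k"
proof (induction k arbitrary: v)
  case 0 then show ?case using assms unfolding lie_subalgebra_def by simp
next
  case (Suc k)
  show ?case
  proof (simp only: Up.simps mem_Collect_eq, intro ballI)
    fix x assume x: "x \<in> I"
    have "br y x \<in> I" using assms(2) Suc(3) x unfolding lie_ideal_def by blast
    then have "- br y x \<in> I" using assms(2) neg_mem unfolding lie_ideal_def by blast
    then have xy: "br x y \<in> I" using br_anti[of x y] by simp
    have "br (br x y) v \<in> Up br L I k" using Suc(2) xy by simp
    moreover have "br y (br x v) \<in> Up br L I k" using Suc x by simp
    ultimately show "br x (br y v) \<in> Up br L I k"
      unfolding J1[of x y v] using Up_closed[OF assms(1)] by blast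
  qed
qed

lemma Up_q:
  assumes "lie_subalgebra sc br L" "lie_ideal sc br L I" "\<forall>x\<in>I. br q x \<in> L"
  shows "v \<in> Up br L I k \<Longrightarrow> br q v \<in> Up br L I (Suc k)"
proof (induction k arbitrary: v)
  case 0
  show ?case
  proof (simp only: Up.simps mem_Collect_eq, intro ballI)
    fix x assume x: "x \<in> I"
    have "br q x \<in> L" using assms(3) x by blast
    then have "- br q x \<in> L" using assms(1) neg_mem unfolding lie_subalgebra_def by blast
    then have xq: "br x q \<in> L" using br_anti[of x q] by simp
    have vL: "v \<in> L" using 0 by simp
    have "br (br x q) v \<in> L" using assms(1) xq vL unfolding lie_subalgebra_def by blast
    moreover have "br v x \<in> I" using assms(2) vL x unfolding lie_ideal_def by blast
    then have "- br v x \<in> I" using assms(2) neg_mem unfolding lie_ideal_def by blast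
    then have "br x v \<in> I" using br_anti[of x v] by simp
    then have "br q (br x v) \<in> L" using assms(3) by blast
    ultimately show "br x (br q v) \<in> L"
      unfolding J1[of x q v] using assms(1) unfolding lie_subalgebra_def by blast
  qed
next
  case (Suc k)
  have "\<forall>x\<in>I. br x (br q v) \<in> Up br L I (Suc k)"
  proof (intro ballI)
    fix x assume x: "x \<in> I"
    have "br q x \<in> L" using assms(3) x by blast
    then have "- br q x \<in> L" using assms(1) neg_mem unfolding lie_subalgebra_def by blast
    then have xq: "br x q \<in> L" using br_anti[of x q] by simp
    have "br (br x q) v \<in> Up br L I (Suc k)" using Up_L[OF assms(1,2) Suc(2) xq] .
    moreover have "br x v \<in> Up br L I k" using Suc(2) x by simp
    then have "br q (br x v) \<in> Up br L I (Suc k)" using Suc(1) by blast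
    ultimately show "br x (br q v) \<in> Up br L I (Suc k)"
      unfolding J1[of x q v] using Up_closed[OF assms(1)] by blast
  qed
  then show ?case by (simp only: Up.simps(2) mem_Collect_eq)
qed

lemma AQL_Dn:
  assumes "lie_subalgebra sc br L" "lie_ideal sc br L I"
  shows "a \<in> alg_gen sc (ad br ` L) \<Longrightarrow> Dn sc br L I k v \<Longrightarrow> Dn sc br L I k (a v)"
proof (induction a arbitrary: v rule: alg_gen.induct)
  case (gen f) then show ?case using Dn_L[OF assms] by (auto simp: ad_def)
next
  case zero then show ?case by (simp add: Dn.zer)
next
  case (add f g) then show ?case by (simp add: Dn.ad)
next
  case (smult f c) then show ?case by (simp add: Dn.sm)
next
  case (mult f g) then show ?case by simp
qed

lemma AQL_Up:
  assumes "lie_subalgebra sc br L" "lie_ideal sc br L I"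
  shows "a \<in> alg_gen sc (ad br ` L) \<Longrightarrow> v \<in> Up br L I k \<Longrightarrow> a v \<in> Up br L I k"
proof (induction a arbitrary: v rule: alg_gen.induct)
  case (gen f) then show ?case using Up_L[OF assms] by (auto simp: ad_def)
next
  case zero then show ?case using Up_closed[OF assms(1)] by simp
next
  case (add f g) then show ?case using Up_closed[OF assms(1)] by simp
next
  case (smult f c) then show ?case using Up_closed[OF assms(1)] by simp
next
  case (mult f g) then show ?case by simp
qed

lemma It_Dn:
  assumes "lie_subalgebra sc br L" "lie_ideal sc br L I"
  shows "f \<in> ideal_gen sc (AQL sc br L) (ad br ` I) \<Longrightarrow> Dn sc br L I k v \<Longrightarrow> Dn sc br L I (Suc k) (f v)"
proof (induction f arbitrary: v rule: ideal_gen.induct)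
  case (gen f) then show ?case by (auto simp: ad_def intro: Dn.brk)
next
  case zero then show ?case by (simp add: Dn.zer)
next
  case (add f g) then show ?case by (simp add: Dn.ad)
next
  case (smult f c) then show ?case by (simp add: Dn.sm)
next
  case (lmult a f) then show ?case using AQL_Dn[OF assms] by (simp add: AQL_def)
next
  case (rmult a f) then show ?case using AQL_Dn[OF assms] by (simp add: AQL_def)
qed

lemma It_Up:
  assumes "lie_subalgebra sc br L" "lie_ideal sc br L I"
  shows "f \<in> ideal_gen sc (AQL sc br L) (ad br ` I) \<Longrightarrow> v \<in> Up br L I (Suc k) \<Longrightarrow> f v \<in> Up br L I k"
proof (induction f arbitrary: v rule: ideal_gen.induct)
  case (gen f) then show ?case by (auto simp: ad_def)
next
  case zero then show ?case using Up_closed[OF assms(1)] by simp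
next
  case (add f g) then show ?case using Up_closed[OF assms(1)] by simp
next
  case (smult f c) then show ?case using Up_closed[OF assms(1)] by simp
next
  case (lmult a f) then show ?case using AQL_Up[OF assms] by (simp add: AQL_def)
next
  case (rmult a f)
  have "a v \<in> Up br L I (Suc k)" using AQL_Up[OF assms, of a v "Suc k"] rmult(1,4)
    unfolding AQL_def by blast
  then show ?case using rmult(3) by simp
qed

lemma pow_Dn:
  assumes "lie_subalgebra sc br L" "lie_ideal sc br L I"
  shows "f \<in> ideal_pow sc (Itilde sc br L I) (Suc n) \<Longrightarrow> Dn sc br L I k v \<Longrightarrow> Dn sc br L I (k + Suc n) (f v)"
proof (induction n arbitrary: f k v)
  case 0 then show ?case using It_Dn[OF assms] by (simp add: Itilde_def)
next
  case (Suc n)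
  have "f \<in> set_prod sc (Itilde sc br L I) (ideal_pow sc (Itilde sc br L I) (Suc n))"
    using Suc(2) by simp
  then show ?case using Suc(3)
  proof (induction f arbitrary: v rule: set_prod.induct)
    case (prod g h)
    have "Dn sc br L I (k + Suc n) (h v)" using Suc.IH prod by blast
    then show ?case using It_Dn[OF assms] prod(1) by (simp add: Itilde_def)
  next
    case zero then show ?case by (simp add: Dn.zer)
  next
    case (add f g) then show ?case by (simp add: Dn.ad)
  next
    case (smult f c) then show ?case by (simp add: Dn.sm)
  qed
qed

lemma pow_Up:
  assumes "lie_subalgebra sc br L" "lie_ideal sc br L I"
  shows "f \<in> ideal_pow sc (Itilde sc br L I) (Suc n) \<Longrightarrow> v \<in> Up br L I (k + Suc n) \<Longrightarrow> f v \<in> Up br L I k"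
proof (induction n arbitrary: f k v)
  case 0 then show ?case using It_Up[OF assms] by (simp add: Itilde_def)
next
  case (Suc n)
  have "f \<in> set_prod sc (Itilde sc br L I) (ideal_pow sc (Itilde sc br L I) (Suc n))"
    using Suc(2) by simp
  then show ?case using Suc(3)
  proof (induction f arbitrary: v rule: set_prod.induct)
    case (prod g h)
    have "h v \<in> Up br L I (Suc k)" using Suc.IH[of h v "Suc k"] prod by simp
    then show ?case using It_Up[OF assms] prod(1) by (simp add: Itilde_def)
  next
    case zero then show ?case using Up_closed[OF assms(1)] by simp
  next
    case (add f g) then show ?case using Up_closed[OF assms(1)] by simp
  next
    case (smult f c) then show ?case using Up_closed[OF assms(1)] by simp
  qed
qed

lemma prod_Dn:
  assumes "lie_subalgebra sc br L" "lie_ideal sc br L I" "\<forall>q\<in>set qs. \<forall>x\<in>I. br q x \<in> L"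
  shows "Dn sc br L I (k + length qs) v \<Longrightarrow> Dn sc br L I k (ad_prod br qs v)"
  using assms(3)
proof (induction qs arbitrary: k)
  case Nil then show ?case by (simp add: ad_prod_def)
next
  case (Cons q qs)
  have "Dn sc br L I (Suc k) (ad_prod br qs v)" using Cons by simp
  then have "Dn sc br L I k (br q (ad_prod br qs v))"
    using Dn_q[OF assms(1,2)] Cons(3) by simp
  then show ?case by (simp add: ad_prod_def ad_def)
qed

lemma prod_Up:
  assumes "lie_subalgebra sc br L" "lie_ideal sc br L I" "\<forall>q\<in>set qs. \<forall>x\<in>I. br q x \<in> L"
  shows "v \<in> Up br L I k \<Longrightarrow> ad_prod br qs v \<in> Up br L I (k + length qs)"
  using assms(3)
proof (induction qs arbitrary: k)
  case Nil then show ?case by (simp add: ad_prod_def)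
next
  case (Cons q qs)
  have "ad_prod br qs v \<in> Up br L I (k + length qs)" using Cons by simp
  then have "br q (ad_prod br qs v) \<in> Up br L I (Suc (k + length qs))"
    using Up_q[OF assms(1,2)] Cons(3) by simp
  then show ?case by (simp add: ad_prod_def ad_def)
qed

end

lemma alg_gen_mono: "S \<subseteq> T \<Longrightarrow> f \<in> alg_gen sc S \<Longrightarrow> f \<in> alg_gen sc T"
  apply (rotate_tac 1) by (induction f rule: alg_gen.induct) (auto intro: alg_gen.intros)

lemma ideal_gen_sub: "A \<subseteq> alg_gen sc T \<Longrightarrow> S \<subseteq> alg_gen sc T \<Longrightarrow> f \<in> ideal_gen sc A S \<Longrightarrow> f \<in> alg_gen sc T"
  apply (rotate_tac 2) by (induction f rule: ideal_gen.induct) (auto intro: alg_gen.intros)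

lemma set_prod_sub: "J \<subseteq> alg_gen sc T \<Longrightarrow> P \<subseteq> alg_gen sc T \<Longrightarrow> f \<in> set_prod sc J P \<Longrightarrow> f \<in> alg_gen sc T"
  apply (rotate_tac 2) by (induction f rule: set_prod.induct) (auto intro: alg_gen.intros)

lemma It_AQ: "Itilde sc br L I \<subseteq> AQ sc br"
proof
  fix f assume "f \<in> Itilde sc br L I"
  moreover have "AQL sc br L \<subseteq> AQ sc br" unfolding AQL_def AQ_def
    using alg_gen_mono[of "ad br ` L" "ad br ` UNIV" _ sc] by blast
  moreover have "ad br ` I \<subseteq> AQ sc br" unfolding AQ_def by (auto intro: alg_gen.gen)
  ultimately show "f \<in> AQ sc br" unfolding Itilde_def AQ_def using ideal_gen_sub by blast
qed

lemma pow_AQ: "ideal_pow sc (Itilde sc br L I) (Suc n) \<subseteq> AQ sc br"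
proof (induction n)
  case 0 then show ?case using It_AQ by simp
next
  case (Suc n) then show ?case using It_AQ set_prod_sub unfolding AQ_def
    by (metis ideal_pow.simps(3) subsetI)
qed

lemma prod_AQ: "qs \<noteq> [] \<Longrightarrow> ad_prod br qs \<in> AQ sc br"
proof (induction qs)
  case Nil then show ?case by simp
next
  case (Cons q qs)
  have g: "ad br q \<in> AQ sc br" unfolding AQ_def by (auto intro: alg_gen.gen)
  show ?case
  proof (cases "qs = []")
    case True
    then have "ad_prod br (q # qs) = ad br q" by (simp add: ad_prod_def)
    then show ?thesis using g by simp
  next
    case False
    then have "ad_prod br qs \<in> AQ sc br" using Cons by simp
    moreover have "ad_prod br (q # qs) = ad br q \<circ> ad_prod br qs" by (simp add: ad_prod_def)
    ultimately show ?thesis using g alg_gen.mult unfolding AQ_def by metis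
  qed
qed

theorem mainTheorem7:
  fixes sc :: "'r::comm_ring_1 \<Rightarrow> 'q::ab_group_add \<Rightarrow> 'q"
    and br :: "'q \<Rightarrow> 'q \<Rightarrow> 'q"
    and L I :: "'q set" and qs :: "'q list"
  assumes "lie_algebra sc br"
    and "lie_subalgebra sc br L"
    and "lie_ideal sc br L I"
    and "qs \<noteq> []"
    and "\<forall>q\<in>set qs. \<forall>x\<in>I. br q x \<in> L"
  shows "(\<lambda>f. ad_prod br qs \<circ> f) ` ideal_pow sc (Itilde sc br L I) (length qs) \<subseteq> A0 sc br L
    \<and> (\<lambda>f. f \<circ> ad_prod br qs) ` ideal_pow sc (Itilde sc br L I) (length qs) \<subseteq> A0 sc br L"
proof -
  interpret lie_algebra sc br by (rule assms(1))
  obtain n where n: "length qs = Suc n" using assms(4) by (cases qs) auto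
  have mu: "ad_prod br qs \<in> AQ sc br" using prod_AQ assms(4) by blast
  have A: "ad_prod br qs \<circ> f \<in> A0 sc br L" if f: "f \<in> ideal_pow sc (Itilde sc br L I) (Suc n)" for f
  proof -
    have "f \<in> AQ sc br" using pow_AQ f by blast
    then have "ad_prod br qs \<circ> f \<in> AQ sc br" using mu alg_gen.mult unfolding AQ_def by metis
    moreover have "ad_prod br qs (f l) \<in> L" if l: "l \<in> L" for l
    proof -
      have "Dn sc br L I 0 l" using l by (rule Dn.base)
      then have "Dn sc br L I (0 + Suc n) (f l)" using pow_Dn[OF assms(2,3) f] by blast
      then have "Dn sc br L I 0 (ad_prod br qs (f l))"
        using prod_Dn[OF assms(2,3,5)] n by simp
      then show ?thesis using Dn_mem[OF assms(3) _ assms(2)] by blast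
    qed
    ultimately show ?thesis unfolding A0_def by auto
  qed
  have B: "f \<circ> ad_prod br qs \<in> A0 sc br L" if f: "f \<in> ideal_pow sc (Itilde sc br L I) (Suc n)" for f
  proof -
    have "f \<in> AQ sc br" using pow_AQ f by blast
    then have "f \<circ> ad_prod br qs \<in> AQ sc br" using mu alg_gen.mult unfolding AQ_def by metis
    moreover have "f (ad_prod br qs l) \<in> L" if l: "l \<in> L" for l
    proof -
      have "l \<in> Up br L I 0" using l by simp
      then have "ad_prod br qs l \<in> Up br L I (0 + Suc n)"
        using prod_Up[OF assms(2,3,5), of l 0] n \<open>l \<in> Up br L I 0\<close> by metis
      then have "f (ad_prod br qs l) \<in> Up br L I 0" using pow_Up[OF assms(2,3) f] by blast
      then show ?thesis by simp
    qed
    ultimately show ?thesis unfolding A0_def by auto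
  qed
  show ?thesis using A B n by auto
qed

end
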